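(* Let $G=A\oplus B$ be an abelian group such that $\mathrm{Hom}(B,A)=\{0\}$. Then $G$ is strongly co-Hopfian if and only if both $A$ and $B$ are strongly co-Hopfian.
   Context: All groups are additive abelian groups. A group $G$ is strongly co-Hopfian (Sco-H) if for every endomorphism $f$ of $G$ the descending chain $\operatorname{im} f\supseteq \operatorname{im} f^2\supseteq\cdots\supseteq \operatorname{im} f^n\supseteq\cdots$ is stationary, i.e. $f^n(G)=f^{n+1}(G)$ for some $n\in\mathbb N$. *)

theory Defs
  imports Main "HOL-Library.Product_Plus"
begin

definition group_hom :: "('a::ab_group_add \<Rightarrow> 'b::ab_group_add) \<Rightarrow> bool" where
  "group_hom f \<longleftrightarrow> (\<forall>x y. f (x + y) = f x + f y)"

definition strongly_co_Hopfian :: "'a::ab_group_add itself \<Rightarrow> bool" where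
  "strongly_co_Hopfian (_ :: 'a itself) \<longleftrightarrow>
     (\<forall>f :: 'a \<Rightarrow> 'a. group_hom f \<longrightarrow>
        (\<exists>n. range (f ^^ n) = range (f ^^ Suc n)))"

end

theory Submission
  imports Defs
begin

lemma funpow_comm: fixes G :: "'a \<Rightarrow> 'a" and f :: "'b \<Rightarrow> 'b" shows "(\<And>x. p (G x) = f (p x)) \<Longrightarrow> p ((G^^n) x) = (f^^n) (p x)"
  by (induction n) auto

lemma range_transfer:
  fixes G :: "'a \<Rightarrow> 'a" and f :: "'b \<Rightarrow> 'b"
  assumes "\<And>x. p (G x) = f (p x)" "surj p"
  shows "p ` range (G^^n) = range (f^^n)"
proof -
  have "p ` range (G^^n) = range (\<lambda>x. (f^^n) (p x))"
    using funpow_comm[of p G f, OF assms(1)] by (simp add: image_image)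
  also have "\<dots> = (f^^n) ` range p" by (simp add: image_image)
  finally show ?thesis using assms(2) by simp
qed

lemma range_Suc: fixes f :: "'a \<Rightarrow> 'a" shows "range (f^^Suc k) = f ` range (f^^k)"
  by (simp add: image_comp)

lemma range_Suc_sub: fixes f :: "'a \<Rightarrow> 'a" shows "range (f^^Suc k) \<subseteq> range (f^^k)"
  by (auto simp: funpow_Suc_right simp del: funpow.simps)

lemma stab:
  fixes f :: "'a \<Rightarrow> 'a"
  assumes "range (f^^n) = range (f^^Suc n)" "n \<le> m"
  shows "range (f^^m) = range (f^^n)"
  using assms(2)
proof (induction m rule: dec_induct)
  case base then show ?case by simp
next
  case (step m)
  have "range (f^^Suc m) = f ` range (f^^m)" by (rule range_Suc)
  also have "\<dots> = f ` range (f^^n)" using step by simp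
  also have "\<dots> = range (f^^n)" using assms(1) range_Suc[where f=f and k=n] by simp
  finally show ?case .
qed

lemma hom0: "group_hom f \<Longrightarrow> f 0 = 0"
  unfolding group_hom_def by (metis add_cancel_right_right add_0)

lemma hom_pow: fixes f :: "'a::ab_group_add \<Rightarrow> 'a" shows "group_hom f \<Longrightarrow> group_hom (f^^n)"
  by (induction n) (auto simp: group_hom_def)

lemma hom_diff: "group_hom f \<Longrightarrow> f (x - y) = f x - f y"
  unfolding group_hom_def by (metis add_diff_cancel diff_add_cancel eq_diff_eq)

theorem mainTheorem1:
  assumes "\<forall>h :: 'b::ab_group_add \<Rightarrow> 'a::ab_group_add. group_hom h \<longrightarrow> h = (\<lambda>_. 0)"
  shows "strongly_co_Hopfian TYPE('a \<times> 'b) \<longleftrightarrow>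
         strongly_co_Hopfian TYPE('a) \<and> strongly_co_Hopfian TYPE('b)"
proof
  assume S: "strongly_co_Hopfian TYPE('a \<times> 'b)"
  show "strongly_co_Hopfian TYPE('a) \<and> strongly_co_Hopfian TYPE('b)"
  proof
    show "strongly_co_Hopfian TYPE('a)"
      unfolding strongly_co_Hopfian_def
    proof (intro allI impI)
      fix f :: "'a \<Rightarrow> 'a" assume hf: "group_hom f"
      define G where "G = (\<lambda>p::'a\<times>'b. (f (fst p), 0::'b))"
      have "group_hom G" using hf unfolding G_def group_hom_def by auto
      then obtain n where n: "range (G^^n) = range (G^^Suc n)"
        using S unfolding strongly_co_Hopfian_def by blast
      have c: "\<And>x. fst (G x) = f (fst x)" by (simp add: G_def)
      have s: "surj (fst :: 'a\<times>'b \<Rightarrow> 'a)" by (rule surjI[of _ "\<lambda>a. (a, 0)"]) simp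
      show "\<exists>n. range (f ^^ n) = range (f ^^ Suc n)"
        using range_transfer[of fst G f, OF c s] n by metis
    qed
    show "strongly_co_Hopfian TYPE('b)"
      unfolding strongly_co_Hopfian_def
    proof (intro allI impI)
      fix f :: "'b \<Rightarrow> 'b" assume hf: "group_hom f"
      define G where "G = (\<lambda>p::'a\<times>'b. (0::'a, f (snd p)))"
      have "group_hom G" using hf unfolding G_def group_hom_def by auto
      then obtain n where n: "range (G^^n) = range (G^^Suc n)"
        using S unfolding strongly_co_Hopfian_def by blast
      have c: "\<And>x. snd (G x) = f (snd x)" by (simp add: G_def)
      have s: "surj (snd :: 'a\<times>'b \<Rightarrow> 'b)" by (rule surjI[of _ "\<lambda>a. (0, a)"]) simp
      show "\<exists>n. range (f ^^ n) = range (f ^^ Suc n)"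
        using range_transfer[of snd G f, OF c s] n by metis
    qed
  qed
next
  assume "strongly_co_Hopfian TYPE('a) \<and> strongly_co_Hopfian TYPE('b)"
  then have SA: "strongly_co_Hopfian TYPE('a)" and SB: "strongly_co_Hopfian TYPE('b)" by auto
  show "strongly_co_Hopfian TYPE('a \<times> 'b)"
    unfolding strongly_co_Hopfian_def
  proof (intro allI impI)
    fix F :: "'a\<times>'b \<Rightarrow> 'a\<times>'b" assume hF: "group_hom F"
    define \<alpha> where "\<alpha> = (\<lambda>a. fst (F (a, 0)))"
    define \<delta> where "\<delta> = (\<lambda>b. snd (F (0, b)))"
    have split: "\<And>(a::'a) (b::'b). (a, b) = (a, 0) + (0, b)" by simp
    have Fadd: "\<And>x y. F (x + y) = F x + F y" using hF group_hom_def by blast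
    have ha: "group_hom \<alpha>" unfolding group_hom_def \<alpha>_def
    proof (intro allI)
      fix x y :: 'a
      have "(x+y, 0::'b) = (x,0)+(y,0)" by simp
      then show "fst (F (x+y,0)) = fst (F(x,0)) + fst (F(y,0))" using Fadd by (metis fst_add)
    qed
    have hd: "group_hom \<delta>" unfolding group_hom_def \<delta>_def
    proof (intro allI)
      fix x y :: 'b
      have "(0::'a, x+y) = (0,x)+(0,y)" by simp
      then show "snd (F (0,x+y)) = snd (F(0,x)) + snd (F(0,y))" using Fadd by (metis snd_add)
    qed
    have hb: "group_hom (\<lambda>b. fst (F (0, b)))" unfolding group_hom_def
    proof (intro allI)
      fix x y :: 'b
      have "(0::'a, x+y) = (0,x)+(0,y)" by simp
      then show "fst (F (0,x+y)) = fst (F(0,x)) + fst (F(0,y))" using Fadd by (metis fst_add)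
    qed
    have b0: "\<And>b. fst (F (0, b)) = 0" using assms hb by metis
    have fstF: "\<And>p. fst (F p) = \<alpha> (fst p)"
    proof -
      fix p :: "'a\<times>'b"
      obtain a b where p: "p = (a, b)" by fastforce
      have "F p = F (a,0) + F (0,b)" using Fadd split p by metis
      then show "fst (F p) = \<alpha> (fst p)" using b0 p \<alpha>_def by simp
    qed
    have F0: "\<And>c. F (0, c) = (0, \<delta> c)" using b0 \<delta>_def by (metis prod.collapse)
    have Fn0: "\<And>n c. (F^^n) (0, c) = (0, (\<delta>^^n) c)"
    proof -
      fix n c show "(F^^n) (0, c) = (0, (\<delta>^^n) c)" by (induction n) (auto simp: F0)
    qed
    have fstFn: "\<And>n p. fst ((F^^n) p) = (\<alpha>^^n) (fst p)"
      using funpow_comm[of fst F \<alpha>] fstF by blast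
    obtain N1 where N1: "range (\<alpha>^^N1) = range (\<alpha>^^Suc N1)"
      using SA ha unfolding strongly_co_Hopfian_def by blast
    obtain N2 where N2: "range (\<delta>^^N2) = range (\<delta>^^Suc N2)"
      using SB hd unfolding strongly_co_Hopfian_def by blast
    define N where "N = max N1 N2"
    have sa: "\<And>m. N \<le> m \<Longrightarrow> range (\<alpha>^^m) = range (\<alpha>^^N)"
      using stab[OF N1] N_def by (metis max.cobounded1 order.trans)
    have sd: "\<And>m. N \<le> m \<Longrightarrow> range (\<delta>^^m) = range (\<delta>^^N)"
      using stab[OF N2] N_def by (metis max.cobounded2 order.trans)
    have hFN: "group_hom (F^^N)" using hF hom_pow by blast
    have hFM: "group_hom (F^^Suc (N+N))" using hF hom_pow by blast
    have "range (F^^(N+N)) \<subseteq> range (F^^Suc (N+N))"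
    proof
      fix x assume "x \<in> range (F^^(N+N))"
      then obtain p where xp: "x = (F^^(N+N)) p" by blast
      define y where "y = (F^^N) p"
      have "(\<alpha>^^N) (fst p) \<in> range (\<alpha>^^Suc N)" using sa[of "Suc N"] by auto
      then obtain a' where a': "(\<alpha>^^N) (fst p) = (\<alpha>^^Suc N) a'" by auto
      define z where "z = (F^^Suc N) (a', 0)"
      have z1: "fst z = (\<alpha>^^Suc N) a'" unfolding z_def by (simp only: fstFn fst_conv)
      have y1: "fst y = (\<alpha>^^N) (fst p)" unfolding y_def by (rule fstFn)
      have "fst z = fst y" using z1 y1 a' by simp
      then have yz: "y = z + (0, snd (y - z))"
        by (simp add: prod_eq_iff)
      define c where "c = snd (y - z)"
      have "x = (F^^N) y" using xp y_def by (simp add: funpow_add)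
      also have "\<dots> = (F^^N) (z + (0, c))" using yz c_def by simp
      also have "\<dots> = (F^^N) z + (F^^N) (0, c)" using hFN unfolding group_hom_def by blast
      also have "(F^^N) z = (F^^(N + Suc N)) (a', 0)" unfolding z_def by (simp only: funpow_add o_apply)
      also have "N + Suc N = Suc (N+N)" by simp
      also have "(F^^N) (0, c) = (0, (\<delta>^^N) c)" by (rule Fn0)
      finally have x1: "x = (F^^Suc (N+N)) (a', 0) + (0, (\<delta>^^N) c)" .
      have "(\<delta>^^N) c \<in> range (\<delta>^^Suc (N+N))" using sd[of "Suc (N+N)"] by auto
      then obtain b where b: "(\<delta>^^N) c = (\<delta>^^Suc (N+N)) b" by auto
      have "x = (F^^Suc (N+N)) (a', 0) + (F^^Suc (N+N)) (0, b)" using x1 b Fn0[of "Suc (N+N)" b] by simp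
      also have "\<dots> = (F^^Suc (N+N)) ((a', 0) + (0, b))" using hFM[unfolded group_hom_def, rule_format, of "(a', 0)" "(0, b)", symmetric] by (simp only:)
      finally show "x \<in> range (F^^Suc (N+N))" by (rule image_eqI[OF _ UNIV_I])
    qed
    then have "range (F^^(N+N)) = range (F^^Suc (N+N))" using range_Suc_sub[where f=F and k="N+N"] by (rule subset_antisym)
    then show "\<exists>n. range (F ^^ n) = range (F ^^ Suc n)" by (rule exI)
  qed
qed

end
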